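(* Fix $\delta>0$ and a sequence $(T_N)_N$ with $T_N\in2\mathbb N$, $T_N\le N$, $T_N\to\infty$. Set $K_N(n):=\mathcal P_{\delta,T_N}(\tau_1=n)$ and $a_N:=\lfloor\sqrt{T_N}\rfloor/2$. For every $\eta>0$ there exists $N_1=N_1(\eta)$ such that for all $N\ge N_1$ and all integers $0\le t\le N-\lfloor\sqrt{T_N}\rfloor$, $$\sum_{r\in\mathbb N,\ r\ge t+a_N}K_N(r)\;\le\;\eta\sum_{r\in\mathbb N,\ t+1\le r\le t+a_N}K_N(r).$$
   Context: $(S_n)$ is the simple symmetric random walk on $\mathbb Z$ started at $0$ with law $\mathbf P$. For $T\in2\mathbb N$, $\tau_1^T:=\inf\{n>0:S_n\in T\mathbb Z\}$, $q_T(n):=\mathbf P(\tau^T_1=n)$, $Q_T(\lambda):=\mathbf E[e^{-\lambda\tau^T_1}]$; for $\delta>0$, $\phi(\delta,T)$ is the unique real solution $\lambda$ of $Q_T(\lambda)=e^{-\delta}$. Under $\mathcal P_{\delta,T}$, $\tau_1$ is $\mathbb N$-valued with $\mathcal P_{\delta,T}(\tau_1=n)=e^\delta q_T(n)e^{-\phi(\delta,T)n}$. *)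

theory Defs
  imports "HOL-Analysis.Analysis"
begin

text \<open>Step sequences of length n of the simple symmetric random walk that hit
  T*Z for the first time (after time 0) exactly at time n. Partial sums
  sum_list (take k xs) are the positions S_k.\<close>
definition first_hit_paths :: "nat \<Rightarrow> nat \<Rightarrow> int list set" where
  "first_hit_paths T n = {xs. xs \<in> lists {-1, 1} \<and> length xs = n \<and> 0 < n \<and>
      int T dvd sum_list (take n xs) \<and>
      (\<forall>k. 0 < k \<and> k < n \<longrightarrow> \<not> int T dvd sum_list (take k xs))}"

definition q :: "nat \<Rightarrow> nat \<Rightarrow> real" where
  "q T n = real (card (first_hit_paths T n)) / 2 ^ n"

definition phi :: "real \<Rightarrow> nat \<Rightarrow> real" where
  "phi \<delta> T = (THE l. summable (\<lambda>n. q T n * exp (- l * real n)) \<and>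
                     (\<Sum>n. q T n * exp (- l * real n)) = exp (- \<delta>))"

definition Kdist :: "real \<Rightarrow> nat \<Rightarrow> nat \<Rightarrow> real" where
  "Kdist \<delta> T n = exp \<delta> * q T n * exp (- phi \<delta> T * real n)"

end

theory Submission
  imports Defs
begin


definition okw :: "int \<Rightarrow> int \<Rightarrow> int list \<Rightarrow> bool" where
  "okw T x ys \<longleftrightarrow> (\<forall>k\<le>length ys. 0 < x + sum_list (take k ys) \<and> x + sum_list (take k ys) < T)"

definition Wset :: "int \<Rightarrow> nat \<Rightarrow> int \<Rightarrow> int \<Rightarrow> int list set" where
  "Wset T j x y = {ys. ys \<in> lists {-1,1} \<and> length ys = j \<and> okw T x ys \<and> x + sum_list ys = y}"

definition Pw :: "int \<Rightarrow> nat \<Rightarrow> int \<Rightarrow> int \<Rightarrow> nat" where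
  "Pw T j x y = card (Wset T j x y)"

lemma finite_Wset: "finite (Wset T j x y)"
proof -
  have "Wset T j x y \<subseteq> {xs. set xs \<subseteq> {-1,1} \<and> length xs = j}"
    unfolding Wset_def by auto
  moreover have "finite {xs. set xs \<subseteq> ({-1,1}::int set) \<and> length xs = j}"
    by (rule finite_lists_length_eq) simp
  ultimately show ?thesis by (rule finite_subset)
qed

lemma okw_snoc: "okw T x (ys @ [s]) \<longleftrightarrow> okw T x ys \<and> 0 < x + sum_list ys + s \<and> x + sum_list ys + s < T"
proof
  assume a: "okw T x (ys @ [s])"
  have "okw T x ys" unfolding okw_def
  proof (intro allI impI)
    fix k assume "k \<le> length ys"
    then show "0 < x + sum_list (take k ys) \<and> x + sum_list (take k ys) < T"
      using a[unfolded okw_def, rule_format, of k] by simp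
  qed
  moreover have "0 < x + sum_list ys + s \<and> x + sum_list ys + s < T"
    using a[unfolded okw_def, rule_format, of "Suc (length ys)"] by (simp add: add.assoc)
  ultimately show "okw T x ys \<and> 0 < x + sum_list ys + s \<and> x + sum_list ys + s < T" by blast
next
  assume a: "okw T x ys \<and> 0 < x + sum_list ys + s \<and> x + sum_list ys + s < T"
  show "okw T x (ys @ [s])" unfolding okw_def
  proof (intro allI impI)
    fix k assume k: "k \<le> length (ys @ [s])"
    show "0 < x + sum_list (take k (ys @ [s])) \<and> x + sum_list (take k (ys @ [s])) < T"
    proof (cases "k \<le> length ys")
      case True then show ?thesis using a[THEN conjunct1, unfolded okw_def, rule_format, of k] by simp
    next
      case False then have "k = Suc (length ys)" using k by simp
      then show ?thesis using a by (simp add: add.assoc)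
    qed
  qed
qed

lemma Wset_0: "Wset T 0 x y = (if x = y \<and> 0 < x \<and> x < T then {[]} else {})"
  by (auto simp: Wset_def okw_def)

lemma Wset_Suc: "Wset T (Suc j) x y = (if 0 < y \<and> y < T then
   (\<lambda>ys. ys @ [1]) ` Wset T j x (y - 1) \<union> (\<lambda>ys. ys @ [-1]) ` Wset T j x (y + 1) else {})"
proof (cases "0 < y \<and> y < T")
  case True
  show ?thesis
  proof (rule set_eqI, rule iffI)
    fix zs assume "zs \<in> Wset T (Suc j) x y"
    then have z: "zs \<in> lists {-1,1}" "length zs = Suc j" "okw T x zs" "x + sum_list zs = y"
      by (auto simp: Wset_def)
    then obtain ys s where zs: "zs = ys @ [s]" by (metis length_Suc_conv_rev)
    have s: "s = 1 \<or> s = -1" using z(1) zs by auto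
    have ys: "ys \<in> lists {-1,1}" "length ys = j" "okw T x ys" using z zs okw_snoc by auto
    show "zs \<in> (if 0 < y \<and> y < T then
   (\<lambda>ys. ys @ [1]) ` Wset T j x (y - 1) \<union> (\<lambda>ys. ys @ [-1]) ` Wset T j x (y + 1) else {})"
      using s ys z(4) True unfolding zs by (auto simp: Wset_def)
  next
    fix zs assume "zs \<in> (if 0 < y \<and> y < T then
   (\<lambda>ys. ys @ [1]) ` Wset T j x (y - 1) \<union> (\<lambda>ys. ys @ [-1]) ` Wset T j x (y + 1) else {})"
    then show "zs \<in> Wset T (Suc j) x y" using True
      by (auto simp: Wset_def okw_snoc)
  qed
next
  case False
  then show ?thesis by (auto simp: Wset_def okw_def)
qed

lemma Pw_0: "Pw T 0 x y = (if x = y \<and> 0 < x \<and> x < T then 1 else 0)"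
  by (simp add: Pw_def Wset_0)

lemma Pw_Suc: "Pw T (Suc j) x y = (if 0 < y \<and> y < T then Pw T j x (y - 1) + Pw T j x (y + 1) else 0)"
proof (cases "0 < y \<and> y < T")
  case True
  have "card ((\<lambda>ys. ys @ [1]) ` Wset T j x (y - 1) \<union> (\<lambda>ys. ys @ [-1]) ` Wset T j x (y + 1))
     = card ((\<lambda>ys. ys @ [1]) ` Wset T j x (y - 1)) + card ((\<lambda>ys. ys @ [-1::int]) ` Wset T j x (y + 1))"
    by (rule card_Un_disjoint) (auto simp: finite_Wset)
  also have "\<dots> = Pw T j x (y - 1) + Pw T j x (y + 1)"
    unfolding Pw_def by (subst card_image, simp add: inj_on_def)+ simp
  finally show ?thesis using True by (simp add: Pw_def Wset_Suc)
next
  case False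
  then have "Wset T (Suc j) x y = {}" by (subst Wset_Suc) (use False in auto)
  then show ?thesis using False unfolding Pw_def by auto
qed


lemma Pw_out_y: "\<not> (0 < y \<and> y < T) \<Longrightarrow> Pw T j x y = 0"
  by (cases j) (auto simp: Pw_0 Pw_Suc)

lemma Pw_out_x: "\<not> (0 < x \<and> x < T) \<Longrightarrow> Pw T j x y = 0"
  by (induction j arbitrary: y) (auto simp: Pw_0 Pw_Suc)

lemma Pw_Suc_left: "Pw T (Suc j) x y = (if 0 < x \<and> x < T then Pw T j (x - 1) y + Pw T j (x + 1) y else 0)"
proof (induction j arbitrary: x y)
  case 0
  then show ?case by (auto simp: Pw_Suc Pw_0)
next
  case (Suc j)
  have l: "Pw T (Suc j) x (y - 1) = (if 0 < x \<and> x < T then Pw T j (x - 1) (y - 1) + Pw T j (x + 1) (y - 1) else 0)"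
    "Pw T (Suc j) x (y + 1) = (if 0 < x \<and> x < T then Pw T j (x - 1) (y + 1) + Pw T j (x + 1) (y + 1) else 0)"
    using Suc.IH by blast+
  have r: "Pw T (Suc j) (x - 1) y = (if 0 < y \<and> y < T then Pw T j (x - 1) (y - 1) + Pw T j (x - 1) (y + 1) else 0)"
    "Pw T (Suc j) (x + 1) y = (if 0 < y \<and> y < T then Pw T j (x + 1) (y - 1) + Pw T j (x + 1) (y + 1) else 0)"
    by (rule Pw_Suc)+
  show ?case
    by (subst Pw_Suc) (simp only: l r, auto)
qed

lemma Pw_sym: "Pw T j x y = Pw T j y x"
proof (induction j arbitrary: x y)
  case 0
  then show ?case by (auto simp: Pw_0)
next
  case (Suc j)
  have "Pw T (Suc j) y x = (if 0 < y \<and> y < T then Pw T j (y - 1) x + Pw T j (y + 1) x else 0)"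
    by (rule Pw_Suc_left)
  then show ?case by (simp add: Pw_Suc Suc.IH[of "y - 1" x] Suc.IH[of "y + 1" x])
qed

lemma Pw_refl: "Pw T j x y = Pw T j (T - x) (T - y)"
proof (induction j arbitrary: y)
  case 0
  then show ?case by (auto simp: Pw_0)
next
  case (Suc j)
  have a: "T - y - 1 = T - (y + 1)" "T - y + 1 = T - (y - 1)" by simp_all
  show ?case by (simp add: Pw_Suc Suc.IH a)
qed

lemma Pw_parity: "odd (int j + x + y) \<Longrightarrow> Pw T j x y = 0"
proof (induction j arbitrary: y)
  case 0
  then show ?case by (auto simp: Pw_0)
next
  case (Suc j)
  have "odd (int j + x + (y - 1))" "odd (int j + x + (y + 1))" using Suc.prems by presburger+
  then show ?case by (simp add: Pw_Suc Suc.IH)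
qed

lemma Pw_far: "y > x + int j \<Longrightarrow> Pw T j x y = 0"
proof (induction j arbitrary: y)
  case 0
  then show ?case by (auto simp: Pw_0)
next
  case (Suc j)
  then show ?case by (simp add: Pw_Suc)
qed

lemma Pw_semi: "Pw T (a + b) x y = (\<Sum>z\<in>{1..T-1}. Pw T a x z * Pw T b z y)"
proof (induction b arbitrary: y)
  case 0
  have "(\<Sum>z\<in>{1..T-1}. Pw T a x z * Pw T 0 z y) = (\<Sum>z\<in>{1..T-1}. if z = y then Pw T a x y else 0)"
    by (rule sum.cong) (auto simp: Pw_0)
  also have "\<dots> = Pw T a x y" using Pw_out_y[of y T a x] by (simp)
  finally show ?case by simp
next
  case (Suc b)
  have "Pw T (a + Suc b) x y = (if 0 < y \<and> y < T then Pw T (a+b) x (y - 1) + Pw T (a+b) x (y + 1) else 0)"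
    by (simp add: Pw_Suc)
  also have "\<dots> = (\<Sum>z\<in>{1..T-1}. Pw T a x z * Pw T (Suc b) z y)"
    by (simp add: Suc.IH Pw_Suc sum.distrib[symmetric] algebra_simps; auto)
  finally show ?case .
qed


lemma sum_shift_int: "(\<Sum>y\<in>{a..b::int}. f (y + k)) = (\<Sum>z\<in>{a+k..b+k}. f z)"
  by (rule sum.reindex_bij_witness[where i="\<lambda>z. z - k" and j="\<lambda>y. y + k"]) auto

definition cc :: "int \<Rightarrow> nat \<Rightarrow> nat" where
  "cc T j = Pw T j 1 1 + Pw T j 1 (T - 1)"

definition ss :: "int \<Rightarrow> nat \<Rightarrow> nat" where
  "ss T j = (\<Sum>x\<in>{1..T-1}. Pw T j 1 x)"

definition uu :: "int \<Rightarrow> nat \<Rightarrow> int \<Rightarrow> nat" where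
  "uu T i x = Pw T i 1 x + Pw T i 1 (T - x)"

lemma Pw_sq_sum: "(\<Sum>x\<in>{1..T-1}. Pw T i a x * Pw T i x b) = Pw T (2*i) a b"
  using Pw_semi[of T i i a b] by (simp add: mult_2)

lemma uu_sq: "(\<Sum>x\<in>{1..T-1}. (uu T i x)^2) = 2 * cc T (2*i)"
proof -
  have e: "(uu T i x)^2 = Pw T i 1 x * Pw T i x 1 + 2 * (Pw T i 1 x * Pw T i x (T - 1))
       + Pw T i (T - 1) x * Pw T i x (T - 1)" for x
  proof -
    have "Pw T i 1 (T - x) = Pw T i x (T - 1)"
      using Pw_refl[of T i 1 "T - x"] Pw_sym by simp
    moreover have "Pw T i x 1 = Pw T i 1 x" by (rule Pw_sym)
    moreover have "Pw T i (T - 1) x = Pw T i x (T - 1)" by (rule Pw_sym)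
    ultimately show ?thesis unfolding uu_def by (simp add: power2_eq_square algebra_simps)
  qed
  have "Pw T (2*i) (T - 1) (T - 1) = Pw T (2*i) 1 1" using Pw_refl[of T "2*i" 1 1] by simp
  then show ?thesis
    by (simp add: e sum.distrib sum_distrib_left[symmetric] Pw_sq_sum cc_def)
qed

lemma uu_Suc: "uu T (Suc i) y = (if 0 < y \<and> y < T then uu T i (y - 1) + uu T i (y + 1) else 0)"
proof -
  have a: "T - y - 1 = T - (y + 1)" "T - y + 1 = T - (y - 1)" by simp_all
  show ?thesis unfolding uu_def by (auto simp: Pw_Suc a)
qed

lemma uu_0: "uu T i 0 = 0" "uu T i T = 0"
  unfolding uu_def by (auto simp: Pw_out_y)

lemma norm_step:
  fixes u :: "int \<Rightarrow> nat"
  assumes "u 0 = 0" "u T = 0" "T \<ge> 2"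
  shows "(\<Sum>y\<in>{1..T-1}. (u (y - 1) + u (y + 1))^2) \<le> 4 * (\<Sum>y\<in>{1..T-1}. (u y)^2)"
proof -
  have "(\<Sum>y\<in>{1..T-1}. (u (y - 1) + u (y + 1))^2) \<le> (\<Sum>y\<in>{1..T-1}. 2 * (u (y - 1))^2 + 2 * (u (y + 1))^2)"
  proof (rule sum_mono)
    fix y
    have "(int (u (y - 1)) + int (u (y + 1)))^2 \<le> 2 * (int (u (y - 1)))^2 + 2 * (int (u (y + 1)))^2"
      by (smt (verit) zero_le_power2 power2_diff power2_sum)
    then show "(u (y - 1) + u (y + 1))^2 \<le> 2 * (u (y - 1))^2 + 2 * (u (y + 1))^2"
      by (metis (mono_tags, lifting) of_nat_add of_nat_le_iff of_nat_mult of_nat_numeral of_nat_power)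
  qed
  also have "\<dots> = 2 * (\<Sum>y\<in>{1..T-1}. (u (y + -1))^2) + 2 * (\<Sum>y\<in>{1..T-1}. (u (y + 1))^2)"
    by (simp add: sum.distrib sum_distrib_left)
  also have "\<dots> \<le> 2 * (\<Sum>y\<in>{1..T-1}. (u y)^2) + 2 * (\<Sum>y\<in>{1..T-1}. (u y)^2)"
  proof -
    have "(\<Sum>y\<in>{1..T-1}. (u (y + -1))^2) = (\<Sum>y\<in>{0..T-2}. (u y)^2)"
      by (subst sum_shift_int[of "\<lambda>z. (u z)^2"]) simp
    also have "\<dots> = (\<Sum>y\<in>{1..T-2}. (u y)^2)"
    proof -
      have "{0..T-2} = insert 0 {1..T-2}" using assms by auto
      then show ?thesis using assms by simp
    qed
    also have "\<dots> \<le> (\<Sum>y\<in>{1..T-1}. (u y)^2)" by (rule sum_mono2) auto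
    finally have A: "(\<Sum>y\<in>{1..T-1}. (u (y + -1))^2) \<le> (\<Sum>y\<in>{1..T-1}. (u y)^2)" .
    have "(\<Sum>y\<in>{1..T-1}. (u (y + 1))^2) = (\<Sum>y\<in>{2..T}. (u y)^2)"
      by (subst sum_shift_int[of "\<lambda>z. (u z)^2"]) simp
    also have "\<dots> = (\<Sum>y\<in>{2..T-1}. (u y)^2)"
    proof -
      have "{2..T} = insert T {2..T-1}" using assms by auto
      then show ?thesis using assms by simp
    qed
    also have "\<dots> \<le> (\<Sum>y\<in>{1..T-1}. (u y)^2)" by (rule sum_mono2) auto
    finally have B: "(\<Sum>y\<in>{1..T-1}. (u (y + 1))^2) \<le> (\<Sum>y\<in>{1..T-1}. (u y)^2)" .
    show ?thesis using A B by simp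
  qed
  finally show ?thesis by simp
qed

lemma cc_step: assumes "T \<ge> 2" shows "cc T (2*i + 2) \<le> 4 * cc T (2*i)"
proof -
  have "2 * cc T (2*(Suc i)) = (\<Sum>y\<in>{1..T-1}. (uu T (Suc i) y)^2)" by (simp add: uu_sq)
  also have "\<dots> = (\<Sum>y\<in>{1..T-1}. (uu T i (y - 1) + uu T i (y + 1))^2)"
    by (rule sum.cong) (auto simp: uu_Suc)
  also have "\<dots> \<le> 4 * (\<Sum>y\<in>{1..T-1}. (uu T i y)^2)"
    by (rule norm_step) (use assms uu_0 in auto)
  also have "\<dots> = 4 * (2 * cc T (2*i))" by (simp add: uu_sq)
  finally show ?thesis by simp
qed

lemma ss_step: assumes "T \<ge> 3" shows "ss T (Suc j) + cc T j = 2 * ss T j"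
proof -
  have "ss T (Suc j) = (\<Sum>y\<in>{1..T-1}. Pw T j 1 (y + -1)) + (\<Sum>y\<in>{1..T-1}. Pw T j 1 (y + 1))"
    unfolding ss_def by (simp add: Pw_Suc sum.distrib)
  also have "(\<Sum>y\<in>{1..T-1}. Pw T j 1 (y + -1)) = (\<Sum>y\<in>{0..T-2}. Pw T j 1 y)"
    by (subst sum_shift_int[of "\<lambda>z. Pw T j 1 z"]) simp
  also have "(\<Sum>y\<in>{1..T-1}. Pw T j 1 (y + 1)) = (\<Sum>y\<in>{2..T}. Pw T j 1 y)"
    by (subst sum_shift_int[of "\<lambda>z. Pw T j 1 z"]) simp
  finally have 1: "ss T (Suc j) = (\<Sum>y\<in>{0..T-2}. Pw T j 1 y) + (\<Sum>y\<in>{2..T}. Pw T j 1 y)" .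
  have a: "{0..T-2} = insert 0 {1..T-2}" "{1..T-1} = insert (T-1) {1..T-2}"
    "{2..T} = insert T {2..T-1}" "{1..T-1} = insert 1 {2..T-1}" using assms by auto
  have b: "(\<Sum>y\<in>{0..T-2}. Pw T j 1 y) + Pw T j 1 (T - 1) = ss T j"
    unfolding ss_def using assms by (subst a(2), subst a(1)) (simp add: Pw_out_y)
  have c: "(\<Sum>y\<in>{2..T}. Pw T j 1 y) + Pw T j 1 1 = ss T j"
    unfolding ss_def using assms by (subst a(4), subst a(3)) (simp add: Pw_out_y)
  show ?thesis using 1 b c unfolding cc_def by simp
qed

lemma ss_0: "T \<ge> 2 \<Longrightarrow> ss T 0 = 1"
proof -
  assume "T \<ge> 2"
  then have "{1..T-1} = insert 1 {2..T-1}" by auto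
  then show ?thesis unfolding ss_def using \<open>T \<ge> 2\<close> by (simp add: Pw_0)
qed

lemma ss_CS: "real (ss T j)^2 \<le> real (j+1) * real (Pw T (2*j) 1 1)"
proof -
  let ?J = "{1..min (T-1) (1 + int j)}"
  have "ss T j = (\<Sum>x\<in>?J. Pw T j 1 x)"
    unfolding ss_def by (rule sum.mono_neutral_right) (auto simp: Pw_far)
  then have "real (ss T j) = (\<Sum>x\<in>?J. real (Pw T j 1 x))" by simp
  then have "real (ss T j)^2 \<le> (\<Sum>x\<in>?J. (real (Pw T j 1 x))^2) * card ?J"
    using sum_squared_le_sum_of_squares by metis
  also have "\<dots> \<le> (\<Sum>x\<in>{1..T-1}. (real (Pw T j 1 x))^2) * real (j+1)"
  proof (rule mult_mono)
    show "(\<Sum>x\<in>?J. (real (Pw T j 1 x))^2) \<le> (\<Sum>x\<in>{1..T-1}. (real (Pw T j 1 x))^2)"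
      by (rule sum_mono2) auto
    have "card ?J \<le> card {1..1 + int j}" by (rule card_mono) auto
    then show "real (card ?J) \<le> real (j+1)" by simp
  qed (auto intro: sum_nonneg)
  also have "(\<Sum>x\<in>{1..T-1}. (real (Pw T j 1 x))^2) = real (Pw T (2*j) 1 1)"
  proof -
    have "(\<Sum>x\<in>{1..T-1}. (real (Pw T j 1 x))^2) = real (\<Sum>x\<in>{1..T-1}. Pw T j 1 x * Pw T j x 1)"
      by (simp add: power2_eq_square Pw_sym[of T j _ 1])
    then show ?thesis by (simp add: Pw_sq_sum)
  qed
  finally show ?thesis by (simp add: mult.commute)
qed



lemma dvd_range: "(0::int) \<le> v \<Longrightarrow> v \<le> M \<Longrightarrow> M > 0 \<Longrightarrow> M dvd v \<Longrightarrow> v = 0 \<or> v = M"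
  using zdvd_imp_le by fastforce

lemma fhp_small: "T \<ge> 2 \<Longrightarrow> n < 2 \<Longrightarrow> first_hit_paths T n = {}"
proof -
  assume T: "T \<ge> 2" and n: "n < 2"
  { fix xs assume xs: "xs \<in> first_hit_paths T n"
    then have "n = 1" using n by (auto simp: first_hit_paths_def)
    with xs obtain s where "xs = [s]" "s = 1 \<or> s = -1" "int T dvd s"
      by (auto simp: first_hit_paths_def length_Suc_conv)
    then have False using T by (auto dest: zdvd_imp_le) }
  then show ?thesis by blast
qed

lemma sum_take_map_uminus: "sum_list (take k (map uminus xs)) = - sum_list (take k (xs::int list))"
  by (induction xs arbitrary: k) (auto simp: take_Cons')

lemma sum_map_uminus: "sum_list (map uminus xs) = - sum_list (xs::int list)"
  using sum_take_map_uminus[of "length xs" xs] by simp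

lemma fhp_neg: "xs \<in> first_hit_paths T n \<Longrightarrow> map uminus xs \<in> first_hit_paths T n"
  unfolding first_hit_paths_def by (fastforce simp: sum_take_map_uminus sum_map_uminus)

lemma stays_inside:
  fixes xs :: "int list" and Ti :: int
  assumes xs: "xs \<in> lists {-1,1}" "length xs = n" and h: "hd xs = 1"
    and nd: "\<forall>k. 0 < k \<and> k < n \<longrightarrow> \<not> Ti dvd sum_list (take k xs)" and T2: "Ti \<ge> 2"
  shows "0 < k \<Longrightarrow> k < n \<Longrightarrow> 0 < sum_list (take k xs) \<and> sum_list (take k xs) < Ti"
proof (induction k)
  case 0 then show ?case by simp
next
  case (Suc k)
  show ?case
  proof (cases k)
    case 0
    have "xs \<noteq> []" using Suc.prems xs by auto
    then obtain a ys where "xs = a # ys" by (cases xs) auto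
    then have "take (Suc k) xs = [1]" using h 0 by simp
    then show ?thesis using T2 by simp
  next
    case (Suc k')
    then have IH: "0 < sum_list (take k xs) \<and> sum_list (take k xs) < Ti"
      using Suc.IH Suc.prems by simp
    have kn: "k < length xs" using Suc.prems xs by simp
    have e: "sum_list (take (Suc k) xs) = sum_list (take k xs) + xs ! k"
      using kn by (simp add: take_Suc_conv_app_nth)
    have "xs ! k \<in> {-1,1}" using xs kn by (metis in_listsD nth_mem)
    moreover have "\<not> Ti dvd sum_list (take (Suc k) xs)" using nd Suc.prems by blast
    ultimately have "sum_list (take (Suc k) xs) \<noteq> 0" "sum_list (take (Suc k) xs) \<noteq> Ti"
      by auto
    then show ?thesis using IH e \<open>xs ! k \<in> {-1,1}\<close> by auto
  qed
qed


lemma take_fact: "k \<le> length ys \<Longrightarrow> sum_list (take (Suc k) (a # ys @ [s])) = a + sum_list (take k (ys::int list))"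
  by simp

lemma not_dvd_inside: "0 < v \<Longrightarrow> v < (M::int) \<Longrightarrow> \<not> M dvd v"
  using zdvd_imp_le by fastforce

lemma Fp_eq:
  assumes T: "T \<ge> 4"
  shows "{xs \<in> first_hit_paths T (m+2). hd xs = 1} =
     (\<lambda>ys. 1 # ys @ [-1]) ` Wset (int T) m 1 1 \<union> (\<lambda>ys. 1 # ys @ [1]) ` Wset (int T) m 1 (int T - 1)"
  (is "?L = ?R")
proof
  show "?L \<subseteq> ?R"
  proof
    fix xs assume "xs \<in> ?L"
    then have xs: "xs \<in> lists {-1,1}" "length xs = m+2" "int T dvd sum_list xs"
      "\<forall>k. 0 < k \<and> k < m+2 \<longrightarrow> \<not> int T dvd sum_list (take k xs)" "hd xs = 1"
      by (auto simp: first_hit_paths_def)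
    obtain zs where zs: "xs = 1 # zs" using xs(2,5) by (cases xs) auto
    have "length zs = Suc m" using zs xs(2) by simp
    then obtain ys s where zs2: "zs = ys @ [s]" by (metis length_Suc_conv_rev)
    have ly: "length ys = m" using zs zs2 xs(2) by simp
    have s: "s = 1 \<or> s = -1" using xs(1) zs zs2 by auto
    have ysl: "ys \<in> lists {-1,1}" using xs(1) zs zs2 by auto
    have ins: "0 < k \<Longrightarrow> k < m+2 \<Longrightarrow> 0 < sum_list (take k xs) \<and> sum_list (take k xs) < int T" for k
      using stays_inside[OF xs(1) xs(2) xs(5) xs(4)] T by simp
    have ok: "okw (int T) 1 ys" unfolding okw_def
    proof (intro allI impI)
      fix k assume "k \<le> length ys"
      then show "0 < 1 + sum_list (take k ys) \<and> 1 + sum_list (take k ys) < int T"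
        using ins[of "Suc k"] take_fact[of k ys 1 s] ly zs zs2 by simp
    qed
    have v: "0 < 1 + sum_list ys \<and> 1 + sum_list ys < int T"
      using ok unfolding okw_def by (metis order_refl take_all)
    have "sum_list xs = 1 + sum_list ys + s" using zs zs2 by simp
    then have "1 + sum_list ys + s = 0 \<or> 1 + sum_list ys + s = int T"
      using dvd_range[of "1 + sum_list ys + s" "int T"] v s xs(3) T by auto
    then show "xs \<in> ?R"
      using s v ok ly ysl unfolding zs zs2 Wset_def by auto
  qed
next
  show "?R \<subseteq> ?L"
  proof
    fix xs assume "xs \<in> ?R"
    then obtain ys s where ys: "ys \<in> lists {-1,1}" "length ys = m" "okw (int T) 1 ys"
      and xs: "xs = 1 # ys @ [s]" and c: "(s = -1 \<and> 1 + sum_list ys = 1) \<or> (s = 1 \<and> 1 + sum_list ys = int T - 1)"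
      unfolding Wset_def by auto
    have "\<not> int T dvd sum_list (take k xs)" if k: "0 < k" "k < m+2" for k
    proof -
      obtain k' where k': "k = Suc k'" using k by (cases k) auto
      have "0 < 1 + sum_list (take k' ys) \<and> 1 + sum_list (take k' ys) < int T"
        using ys(3) k k' ys(2) unfolding okw_def by simp
      then show ?thesis using take_fact[of k' ys 1 s] k k' ys(2) xs not_dvd_inside by simp
    qed
    moreover have "int T dvd sum_list xs" using c xs by auto
    ultimately show "xs \<in> ?L" using xs ys c unfolding first_hit_paths_def by auto
  qed
qed

lemma fhp_card:
  assumes T: "T \<ge> 4"
  shows "card (first_hit_paths T (m+2)) = 2 * cc (int T) m"
proof -
  let ?F = "first_hit_paths T (m+2)"
  let ?Fp = "{xs \<in> ?F. hd xs = 1}"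
  have cFp: "card ?Fp = cc (int T) m"
  proof -
    have "card ?Fp = card ((\<lambda>ys. 1 # ys @ [-1]) ` Wset (int T) m 1 1) + card ((\<lambda>ys. 1 # ys @ [1::int]) ` Wset (int T) m 1 (int T - 1))"
      unfolding Fp_eq[OF T] by (rule card_Un_disjoint) (auto simp: finite_Wset)
    also have "\<dots> = cc (int T) m"
      unfolding cc_def Pw_def by (subst card_image, simp add: inj_on_def)+ simp
    finally show ?thesis .
  qed
  have finFp: "finite ?Fp" unfolding Fp_eq[OF T] by (simp add: finite_Wset)
  have split: "?F = ?Fp \<union> map uminus ` ?Fp"
  proof
    show "?F \<subseteq> ?Fp \<union> map uminus ` ?Fp"
    proof
      fix xs assume xs: "xs \<in> ?F"
      then have l: "xs \<in> lists {-1,1}" "xs \<noteq> []" by (auto simp: first_hit_paths_def)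
      then have "hd xs = 1 \<or> hd xs = -1" by (cases xs) auto
      moreover have "hd xs = -1 \<Longrightarrow> xs \<in> map uminus ` ?Fp"
      proof -
        assume h: "hd xs = -1"
        have "map uminus xs \<in> ?Fp" using fhp_neg[OF xs] h l(2) by (cases xs) auto
        moreover have "xs = map uminus (map uminus xs)" by simp
        ultimately show ?thesis by blast
      qed
      ultimately show "xs \<in> ?Fp \<union> map uminus ` ?Fp" using xs by blast
    qed
  next
    show "?Fp \<union> map uminus ` ?Fp \<subseteq> ?F" using fhp_neg by blast
  qed
  have disj: "?Fp \<inter> map uminus ` ?Fp = {}"
  proof -
    { fix xs assume "xs \<in> ?Fp" "xs \<in> map uminus ` ?Fp"
      then obtain ys where "ys \<in> ?Fp" "xs = map uminus ys" by blast
      then have "hd xs = -1" using \<open>ys \<in> ?Fp\<close> by (cases ys) (auto simp: first_hit_paths_def)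
      then have False using \<open>xs \<in> ?Fp\<close> by simp }
    then show ?thesis by blast
  qed
  have "card ?F = card ?Fp + card (map uminus ` ?Fp)"
    by (subst split, rule card_Un_disjoint) (use finFp disj in auto)
  also have "card (map uminus ` ?Fp) = card ?Fp"
    by (rule card_image) (simp add: inj_on_def)
  finally show ?thesis using cFp by simp
qed



definition sig :: "nat \<Rightarrow> nat \<Rightarrow> real" where
  "sig T j = real (ss (int T) j) / 2^j"

lemma q_small: "T \<ge> 2 \<Longrightarrow> n < 2 \<Longrightarrow> q T n = 0"
  by (simp add: q_def fhp_small)

lemma q_formula: "T \<ge> 4 \<Longrightarrow> q T (m+2) = real (cc (int T) m) / 2^(m+1)"
  using fhp_card[of T m] by (simp add: q_def)

lemma q_nonneg: "q T n \<ge> 0"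
  by (simp add: q_def)

lemma q_odd:
  assumes "T \<ge> 4" "even T" "odd n" shows "q T n = 0"
proof (cases "n < 2")
  case True then show ?thesis using assms q_small by simp
next
  case False
  then obtain m where n: "n = m + 2" by (metis add.commute le_Suc_ex not_less)
  have "odd (int m + 1 + 1)" using assms(3) n by simp
  moreover have "odd (int m + 1 + (int T - 1))" using assms(2,3) n by simp
  ultimately have "cc (int T) m = 0" unfolding cc_def by (simp add: Pw_parity)
  then show ?thesis using q_formula[OF assms(1)] n by simp
qed

lemma q_step:
  assumes "T \<ge> 4" shows "q T (2*i + 4) \<le> q T (2*i + 2)"
proof -
  have "real (cc (int T) (2*i+2)) \<le> 4 * real (cc (int T) (2*i))"
    using cc_step[of "int T" i] assms by simp
  then have "real (cc (int T) (2*i+2)) / 2^(2*i+3) \<le> real (cc (int T) (2*i)) / 2^(2*i+1)"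
    by (simp add: field_simps power_add)
  moreover have "q T (2*i + 4) = real (cc (int T) (2*i+2)) / 2^(2*i+3)"
    using q_formula[OF assms, of "2*i+2"] by (simp add: numeral_eq_Suc)
  moreover have "q T (2*i + 2) = real (cc (int T) (2*i)) / 2^(2*i+1)"
    using q_formula[OF assms, of "2*i"] by simp
  ultimately show ?thesis by simp
qed

lemma q_mono:
  assumes "T \<ge> 4" "even T" "even r0" "2 \<le> r0" "r0 \<le> r"
  shows "q T r \<le> q T r0"
proof (cases "even r")
  case False
  then show ?thesis using q_odd[OF assms(1,2)] q_nonneg by simp
next
  case True
  obtain k where k: "r0 = 2*k" using assms(3) by (rule evenE)
  define i where "i = k - 1"
  have i: "r0 = 2*i + 2" using k assms(4) unfolding i_def by simp
  obtain k' where k': "r = 2*k'" using True by (rule evenE)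
  define d where "d = k' - k"
  have d: "r = r0 + 2*d" using k k' assms(5) unfolding d_def by simp
  have "q T (2*i + 2 + 2*d) \<le> q T (2*i + 2)" for d
  proof (induction d)
    case 0 then show ?case by simp
  next
    case (Suc d)
    have "q T (2*i + 2 + 2*Suc d) = q T (2*(i+d) + 4)"
      by (rule arg_cong[where f="q T"]) simp
    also have "\<dots> \<le> q T (2*(i+d) + 2)" by (rule q_step[OF assms(1)])
    also have "\<dots> = q T (2*i + 2 + 2*d)"
      by (rule arg_cong[where f="q T"]) simp
    finally show ?case using Suc.IH by simp
  qed
  then show ?thesis using i d by simp
qed

lemma q_tele: "T \<ge> 4 \<Longrightarrow> q T (j+2) = sig T j - sig T (Suc j)"
proof -
  assume T: "T \<ge> 4"
  have "ss (int T) (Suc j) + cc (int T) j = 2 * ss (int T) j"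
    by (rule ss_step) (use T in simp)
  then have "real (ss (int T) (Suc j) + cc (int T) j) = real (2 * ss (int T) j)" by simp
  then have "real (ss (int T) (Suc j)) + real (cc (int T) j) = 2 * real (ss (int T) j)" by simp
  then show ?thesis unfolding sig_def q_formula[OF T]
    by (simp add: field_simps)
qed

lemma sig_0: "T \<ge> 4 \<Longrightarrow> sig T 0 = 1"
  by (simp add: sig_def ss_0)

lemma sig_nonneg: "sig T j \<ge> 0" by (simp add: sig_def)

lemma sig_dec: "T \<ge> 4 \<Longrightarrow> sig T (Suc j) \<le> sig T j"
  using q_tele[of T j] q_nonneg[of T "j+2"] by simp

lemma sig_antimono: assumes "T \<ge> 4" "j \<le> k" shows "sig T k \<le> sig T j"
  using assms(2) by (induction k rule: dec_induct) (auto intro: order_trans sig_dec[OF assms(1)])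

lemma sig_le1: "T \<ge> 4 \<Longrightarrow> sig T j \<le> 1"
  using sig_antimono[of T 0 j] sig_0 by simp

lemma q_le1: assumes "T \<ge> 4" shows "q T n \<le> 1"
proof (cases "n < 2")
  case True then show ?thesis using q_small assms by simp
next
  case False
  then obtain m where n: "n = m + 2" by (metis add.commute le_Suc_ex not_less)
  show ?thesis using q_tele[OF assms, of m] sig_le1[OF assms, of m] sig_nonneg[of T "Suc m"] n by simp
qed

lemma q_partial: "T \<ge> 4 \<Longrightarrow> (\<Sum>n<N+2. q T n) = 1 - sig T N"
proof (induction N)
  case 0 then show ?case by (simp add: q_small sig_0 numeral_2_eq_2)
next
  case (Suc N)
  have "(\<Sum>n<Suc N + 2. q T n) = (\<Sum>n<N+2. q T n) + q T (N+2)" by simp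
  then show ?case using Suc q_tele[of T N] by simp
qed

lemma q_partial_le1: "T \<ge> 4 \<Longrightarrow> (\<Sum>n<N. q T n) \<le> 1"
proof -
  assume T: "T \<ge> 4"
  have "(\<Sum>n<N. q T n) \<le> (\<Sum>n<N+2. q T n)" by (rule sum_mono2) (auto simp: q_nonneg)
  then show ?thesis using q_partial[OF T, of N] sig_nonneg[of T N] by simp
qed

lemma q_summable: "T \<ge> 4 \<Longrightarrow> summable (q T)"
  by (rule summableI_nonneg_bounded[where x=1]) (auto simp: q_nonneg q_partial_le1)

lemma sig_CS: assumes "T \<ge> 4" shows "(sig T j)^2 \<le> 2 * real (j+1) * q T (2*j+2)"
proof -
  have "real (ss (int T) j)^2 \<le> real (j+1) * real (cc (int T) (2*j))"
  proof -
    have "real (Pw (int T) (2*j) 1 1) \<le> real (cc (int T) (2*j))" unfolding cc_def by simp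
    then have "real (j+1) * real (Pw (int T) (2*j) 1 1) \<le> real (j+1) * real (cc (int T) (2*j))"
      by (rule mult_left_mono) simp
    then show ?thesis using ss_CS[of "int T" j] by linarith
  qed
  then have A: "real (ss (int T) j)^2 / 4^j \<le> real (j+1) * real (cc (int T) (2*j)) / 4^j"
    by (simp add: divide_right_mono)
  have B: "(sig T j)^2 = real (ss (int T) j)^2 / 4^j"
  proof -
    have "((2::real)^j)^2 = 4^j"
      by (metis power_mult mult.commute power2_eq_square num_double numeral_times_numeral)
    then show ?thesis by (simp add: sig_def power_divide)
  qed
  have C: "q T (2*j+2) = real (cc (int T) (2*j)) / (2 * 4^j)"
    using q_formula[OF assms, of "2*j"] by (simp add: power_mult)
  have D: "real (j+1) * real (cc (int T) (2*j)) / 4^j = 2 * real (j+1) * (real (cc (int T) (2*j)) / (2 * 4^j))"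
    by (simp add: field_simps)
  show ?thesis using A unfolding B C D .
qed

lemma q_even_partial: "(\<Sum>j<J. q T (2*j+2)) \<le> (\<Sum>i<2*J. q T (i+2))"
proof (induction J)
  case 0 then show ?case by simp
next
  case (Suc J)
  have "(\<Sum>i<2*Suc J. q T (i+2)) = (\<Sum>i<2*J. q T (i+2)) + q T (2*J+2) + q T (2*J+3)"
    by (simp add: numeral_eq_Suc)
  then show ?case using Suc q_nonneg[of T "2*J+3"] by simp
qed

lemma surv_bound: assumes "T \<ge> 4" shows "(sig T J)^2 * harm J \<le> 2"
proof -
  have "(sig T J)^2 * harm J = (\<Sum>j<J. (sig T J)^2 / real (Suc j))"
    by (simp add: harm_altdef sum_distrib_left field_simps)
  also have "\<dots> \<le> (\<Sum>j<J. 2 * q T (2*j+2))"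
  proof (rule sum_mono)
    fix j assume "j \<in> {..<J}"
    then have "sig T J \<le> sig T j" using sig_antimono[OF assms] by simp
    then have "(sig T J)^2 \<le> (sig T j)^2" using sig_nonneg by (simp add: power_mono)
    also have "\<dots> \<le> 2 * real (j+1) * q T (2*j+2)" by (rule sig_CS[OF assms])
    finally show "(sig T J)^2 / real (Suc j) \<le> 2 * q T (2*j+2)" by (simp add: field_simps)
  qed
  also have "\<dots> = 2 * (\<Sum>j<J. q T (2*j+2))" by (simp add: sum_distrib_left)
  also have "\<dots> \<le> 2 * (\<Sum>i<2*J. q T (i+2))" using q_even_partial by simp
  also have "(\<Sum>i<2*J. q T (i+2)) \<le> (\<Sum>i<2*J+2. q T i)"
  proof -
    have "(\<Sum>i\<in>(\<lambda>i. i+2) ` {..<2*J}. q T i) = (\<Sum>i<2*J. q T (i+2))"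
      using sum.reindex[of "\<lambda>i. i+2" "{..<2*J}" "q T"] by (simp add: inj_on_def o_def)
    then have "(\<Sum>i<2*J. q T (i+2)) = (\<Sum>i\<in>(\<lambda>i. i+2) ` {..<2*J}. q T i)" by simp
    also have "\<dots> \<le> (\<Sum>i<2*J+2. q T i)" by (rule sum_mono2) (auto simp: q_nonneg)
    finally show ?thesis .
  qed
  also have "\<dots> \<le> 1" using q_partial[OF assms, of "2*J"] sig_nonneg[of T "2*J"] by simp
  finally show ?thesis by simp
qed



lemma q2_pos: "T \<ge> 4 \<Longrightarrow> q T 2 > 0"
  using q_formula[of T 0] by (simp add: cc_def Pw_0 numeral_2_eq_2)

lemma G_unique:
  assumes T: "T \<ge> 4"
    and s1: "summable (\<lambda>n. q T n * exp (- l1 * real n))" and e1: "(\<Sum>n. q T n * exp (- l1 * real n)) = c"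
    and s2: "summable (\<lambda>n. q T n * exp (- l2 * real n))" and e2: "(\<Sum>n. q T n * exp (- l2 * real n)) = c"
  shows "l1 = l2"
proof (rule ccontr)
  assume ne: "l1 \<noteq> l2"
  have key: "(\<Sum>n. q T n * exp (- a * real n)) > (\<Sum>n. q T n * exp (- b * real n))"
    if ab: "a < b" and sa: "summable (\<lambda>n. q T n * exp (- a * real n))"
      and sb: "summable (\<lambda>n. q T n * exp (- b * real n))" for a b
  proof -
    have "0 < (\<Sum>n. q T n * exp (- a * real n) - q T n * exp (- b * real n))"
    proof (rule suminf_pos2[where i=2])
      show "summable (\<lambda>n. q T n * exp (- a * real n) - q T n * exp (- b * real n))"
        using sa sb by (rule summable_diff)
      fix n
      have "exp (- b * real n) \<le> exp (- a * real n)" using ab by (simp add: mult_right_mono)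
      then show "0 \<le> q T n * exp (- a * real n) - q T n * exp (- b * real n)"
        using q_nonneg[of T n] by (simp add: mult_left_mono)
    next
      have "exp (- b * 2) < exp (- a * 2)" using ab by simp
      then show "0 < q T 2 * exp (- a * real 2) - q T 2 * exp (- b * real 2)"
        using q2_pos[OF T] by simp
    qed
    also have "\<dots> = (\<Sum>n. q T n * exp (- a * real n)) - (\<Sum>n. q T n * exp (- b * real n))"
      by (rule suminf_diff[OF sa sb, symmetric])
    finally show ?thesis by simp
  qed
  show False
  proof (cases "l1 < l2")
    case True then show False using key[OF True s1 s2] e1 e2 by simp
  next
    case False then have "l2 < l1" using ne by simp
    then show False using key[OF _ s2 s1] e1 e2 by simp
  qed
qed

lemma phi_lower:
  assumes T: "T \<ge> 4" and l0: "l0 > 0"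
    and big: "exp (- \<delta>) \<le> (\<Sum>n. q T n * exp (- l0) ^ n)"
  shows "phi \<delta> T \<ge> l0"
proof -
  let ?H = "\<lambda>z. \<Sum>n. q T n * z ^ n"
  have sq: "summable (\<lambda>n. q T n * 1 ^ n)" using q_summable[OF T] by simp
  have cont: "isCont ?H z" if "\<bar>z\<bar> < 1" for z :: real
    by (rule isCont_powser[OF sq]) (use that in simp)
  have H0: "?H 0 = 0"
  proof -
    have "(\<lambda>n. q T n * (0::real) ^ n) = (\<lambda>n. 0)"
      using q_small[of T 0] T by (auto simp: fun_eq_iff power_0_left)
    then show ?thesis by simp
  qed
  have z1: "0 < exp (- l0)" "exp (- l0) < 1" using l0 by auto
  have cc: "\<forall>x. 0 \<le> x \<and> x \<le> exp (- l0) \<longrightarrow> isCont ?H x"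
  proof (intro allI impI)
    fix x :: real assume a: "0 \<le> x \<and> x \<le> exp (- l0)"
    then have "x < 1" using z1(2) by linarith
    then have "\<bar>x\<bar> < 1" using a by simp
    then show "isCont ?H x" by (rule cont)
  qed
  have h0: "?H 0 \<le> exp (- \<delta>)" unfolding H0 by simp
  have "\<exists>x. 0 \<le> x \<and> x \<le> exp (- l0) \<and> ?H x = exp (- \<delta>)"
    by (rule IVT[OF h0 big _ cc]) (use z1 in simp)
  then obtain z where z: "0 \<le> z" "z \<le> exp (- l0)" "?H z = exp (- \<delta>)" by blast
  have zpos: "z > 0" using z H0 by (cases "z = 0") auto
  define l where "l = - ln z"
  have el: "exp (- l * real n) = z ^ n" for n
  proof -
    have "exp (real n * ln z) = exp (ln z) ^ n" by (rule exp_of_nat_mult)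
    then show ?thesis unfolding l_def using zpos by (simp add: mult.commute)
  qed
  have sl: "summable (\<lambda>n. q T n * exp (- l * real n))"
    unfolding el
  proof (rule summable_comparison_test'[OF q_summable[OF T]])
    fix n :: nat
    have "z \<le> 1" using z(2) z1(2) by linarith
    then have "z ^ n \<le> 1" using zpos by (simp add: power_le_one)
    then show "norm (q T n * z ^ n) \<le> q T n" using q_nonneg[of T n] zpos
      by (simp add: abs_mult mult_left_le)
  qed
  have el2: "(\<Sum>n. q T n * exp (- l * real n)) = exp (- \<delta>)" unfolding el using z by simp
  have "phi \<delta> T = l"
    unfolding phi_def
  proof (rule the_equality)
    show "summable (\<lambda>n. q T n * exp (- l * real n)) \<and> (\<Sum>n. q T n * exp (- l * real n)) = exp (- \<delta>)"
      using sl el2 by simp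
    fix l' assume "summable (\<lambda>n. q T n * exp (- l' * real n)) \<and> (\<Sum>n. q T n * exp (- l' * real n)) = exp (- \<delta>)"
    then show "l' = l" using G_unique[OF T _ _ sl el2] by blast
  qed
  moreover have "l \<ge> l0"
  proof -
    have "ln z \<le> ln (exp (- l0))" using z zpos by (subst ln_le_cancel_iff) auto
    then show ?thesis unfolding l_def by simp
  qed
  ultimately show ?thesis by simp
qed

lemma uniform_lower:
  assumes d: "\<delta> > 0"
  shows "\<exists>l0>0. \<forall>T\<ge>4. exp (- \<delta>) \<le> (\<Sum>n. q T n * exp (- l0) ^ n)"
proof -
  define \<epsilon> where "\<epsilon> = 1 - exp (- \<delta> / 2)"
  have ep: "0 < \<epsilon>" "\<epsilon> < 1" unfolding \<epsilon>_def using d by auto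
  obtain J where J: "harm J \<ge> 2 / \<epsilon>^2"
    using filterlim_at_top[THEN iffD1, OF harm_at_top, rule_format, of "2 / \<epsilon>^2"]
    by (auto simp: eventually_at_top_linorder)
  have hpos: "harm J > (0::real)" using J ep by (smt (verit) divide_pos_pos zero_less_power)
  define l0 where "l0 = \<delta> / (2 * real (J + 2))"
  have l0: "l0 > 0" unfolding l0_def using d by simp
  have "exp (- \<delta>) \<le> (\<Sum>n. q T n * exp (- l0) ^ n)" if T: "T \<ge> 4" for T
  proof -
    have "(sig T J)^2 \<le> \<epsilon>^2"
    proof -
      have "(sig T J)^2 * harm J \<le> 2" by (rule surv_bound[OF T])
      also have "2 \<le> \<epsilon>^2 * harm J" using J ep by (simp add: field_simps)
      finally show ?thesis using hpos by simp
    qed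
    then have sJ: "sig T J \<le> \<epsilon>" using ep sig_nonneg[of T J] by (simp add: power_mono_iff)
    have sm: "summable (\<lambda>n. q T n * exp (- l0) ^ n)"
    proof (rule summable_comparison_test'[OF q_summable[OF T]])
      fix n :: nat
      have "exp (- l0) ^ n \<le> 1" using l0 by (simp add: power_le_one)
      then show "norm (q T n * exp (- l0) ^ n) \<le> q T n" using q_nonneg[of T n]
        by (simp add: abs_mult mult_left_le)
    qed
    have "(\<Sum>n<J+2. q T n) * exp (- l0) ^ (J+2) \<le> (\<Sum>n<J+2. q T n * exp (- l0) ^ n)"
      unfolding sum_distrib_right
    proof (rule sum_mono)
      fix n assume "n \<in> {..<J+2}"
      then have "exp (- l0) ^ (J+2) \<le> exp (- l0) ^ n" using l0 by (intro power_decreasing) auto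
      then show "q T n * exp (- l0) ^ (J + 2) \<le> q T n * exp (- l0) ^ n"
        using q_nonneg[of T n] by (simp add: mult_left_mono)
    qed
    also have "\<dots> \<le> (\<Sum>n. q T n * exp (- l0) ^ n)"
      by (rule sum_le_suminf[OF sm]) (auto simp: q_nonneg)
    finally have 1: "(\<Sum>n<J+2. q T n) * exp (- l0) ^ (J+2) \<le> (\<Sum>n. q T n * exp (- l0) ^ n)" .
    have 2: "exp (- l0) ^ (J+2) = exp (- \<delta> / 2)"
    proof -
      have "real (J+2) * (- (\<delta> / (2 * real (J + 2)))) = - \<delta> / 2" by (simp add: field_simps)
      then show ?thesis unfolding exp_of_nat_mult[symmetric] l0_def by simp
    qed
    have 3: "(\<Sum>n<J+2. q T n) \<ge> exp (- \<delta> / 2)"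
      using q_partial[OF T, of J] sJ unfolding \<epsilon>_def by simp
    have "exp (- \<delta>) = exp (- \<delta> / 2) * exp (- \<delta> / 2)" by (simp flip: exp_add)
    also have "\<dots> \<le> (\<Sum>n<J+2. q T n) * exp (- l0) ^ (J+2)" unfolding 2
      using 3 by (simp add: mult_right_mono)
    finally show ?thesis using 1 by simp
  qed
  then show ?thesis using l0 by blast
qed



lemma tail_geom:
  fixes C x :: real and m :: nat
  assumes "C \<ge> 0" "0 < x" "x < 1"
  shows "((\<lambda>r. C * x ^ r) has_sum (C * x ^ m / (1 - x))) {r. r \<ge> m}"
proof -
  have B: "{r. r \<ge> m} = (\<lambda>k. k + m) ` UNIV"
  proof (rule set_eqI, rule iffI)
    fix x assume "x \<in> {r. r \<ge> m}"
    then have "x = (x - m) + m" by simp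
    then show "x \<in> (\<lambda>k. k + m) ` UNIV" by blast
  qed auto
  have "(\<lambda>k. C * x ^ m * x ^ k) sums (C * x ^ m * (1 / (1 - x)))"
    by (rule sums_mult) (rule geometric_sums, use assms in simp)
  then have "((\<lambda>k. C * x ^ m * x ^ k) has_sum (C * x ^ m * (1 / (1 - x)))) UNIV"
    by (rule sums_nonneg_imp_has_sum) (use assms in simp)
  then have "(((\<lambda>r. C * x ^ r) \<circ> (\<lambda>k. k + m)) has_sum (C * x ^ m / (1 - x))) UNIV"
    by (simp add: o_def power_add mult_ac)
  then show ?thesis unfolding B by (subst has_sum_reindex) (auto simp: inj_on_def)
qed

theorem lemma9:
  fixes \<delta> :: real and T :: "nat \<Rightarrow> nat"
  assumes "\<delta> > 0"
    and "\<And>N. even (T N)"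
    and "\<And>N. T N \<le> N"
    and "filterlim T at_top sequentially"
  shows "\<forall>\<eta>>0. \<exists>N1. \<forall>N\<ge>N1. \<forall>t::nat.
           real t \<le> real N - of_int \<lfloor>sqrt (real (T N))\<rfloor> \<longrightarrow>
             infsum (Kdist \<delta> (T N))
               {r. real r \<ge> real t + of_int \<lfloor>sqrt (real (T N))\<rfloor> / 2}
             \<le> \<eta> * (\<Sum>r\<in>{r. t + 1 \<le> r \<and> real r \<le> real t + of_int \<lfloor>sqrt (real (T N))\<rfloor> / 2}.
                        Kdist \<delta> (T N) r)"
proof (intro allI impI)
  fix \<eta> :: real assume eta: "\<eta> > 0"
  obtain l0 where l0: "l0 > 0" and l0T: "\<And>T. T \<ge> 4 \<Longrightarrow> exp (- \<delta>) \<le> (\<Sum>n. q T n * exp (- l0) ^ n)"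
    using uniform_lower[OF assms(1)] by blast
  have phiT: "phi \<delta> T' \<ge> l0" if "T' \<ge> 4" for T'
    by (rule phi_lower[OF that l0 l0T[OF that]])
  define c where "c = \<eta> * (1 - exp (- l0))"
  have cpos: "c > 0" unfolding c_def using eta l0 by simp
  define A where "A = 2 + max 0 (- ln c / l0)"
  have A2: "A \<ge> 2" unfolding A_def by simp
  have Ac: "exp (- l0 * (A - 2)) \<le> c"
  proof -
    have "l0 * (A - 2) \<ge> - ln c"
    proof -
      have "l0 * (- ln c / l0) = - ln c" using l0 by simp
      moreover have "l0 * (- ln c / l0) \<le> l0 * (A - 2)" unfolding A_def using l0 by (intro mult_left_mono) auto
      ultimately show ?thesis by simp
    qed
    then have "exp (- l0 * (A - 2)) \<le> exp (ln c)" by simp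
    then show ?thesis using cpos by simp
  qed
  define M where "M = nat \<lceil>(2 * A + 1)^2\<rceil> + 16"
  obtain N1 where N1: "\<And>N. N \<ge> N1 \<Longrightarrow> M \<le> T N"
    using assms(4)[unfolded filterlim_at_top, rule_format, of M] by (auto simp: eventually_sequentially)
  show "\<exists>N1. \<forall>N\<ge>N1. \<forall>t::nat.
           real t \<le> real N - of_int \<lfloor>sqrt (real (T N))\<rfloor> \<longrightarrow>
             infsum (Kdist \<delta> (T N))
               {r. real r \<ge> real t + of_int \<lfloor>sqrt (real (T N))\<rfloor> / 2}
             \<le> \<eta> * (\<Sum>r\<in>{r. t + 1 \<le> r \<and> real r \<le> real t + of_int \<lfloor>sqrt (real (T N))\<rfloor> / 2}.
                        Kdist \<delta> (T N) r)"
  proof (intro exI allI impI)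
    fix N t :: nat assume N: "N1 \<le> N"
    define Tn where "Tn = T N"
    define a where "a = (of_int \<lfloor>sqrt (real Tn)\<rfloor> :: real) / 2"
    define \<phi> where "\<phi> = phi \<delta> Tn"
    have TM: "M \<le> Tn" using N1[OF N] unfolding Tn_def .
    have T4: "Tn \<ge> 4" using TM unfolding M_def by simp
    have Tev: "even Tn" unfolding Tn_def by (rule assms(2))
    have phl: "\<phi> \<ge> l0" unfolding \<phi>_def by (rule phiT[OF T4])
    have aA: "a \<ge> A"
    proof -
      have "real Tn \<ge> (2 * A + 1)^2" using TM unfolding M_def by linarith
      then have "sqrt (real Tn) \<ge> 2 * A + 1" using A2 real_le_rsqrt by blast
      then have "of_int \<lfloor>sqrt (real Tn)\<rfloor> \<ge> 2 * A"
        by (smt (verit, best) real_of_int_floor_add_one_ge)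
      then show ?thesis unfolding a_def by simp
    qed
    have a2: "a \<ge> 2" using aA A2 by simp
    define K where "K = Kdist \<delta> Tn"
    have K: "K r = exp \<delta> * q Tn r * exp (- \<phi> * real r)" for r
      unfolding K_def Kdist_def \<phi>_def by simp
    have Knn: "K r \<ge> 0" for r unfolding K using q_nonneg[of Tn r] by simp
    define r0 where "r0 = (if even (t+1) then t+1 else t+2)"
    have r0: "even r0" "2 \<le> r0" "t + 1 \<le> r0" "r0 \<le> t + 2"
      unfolding r0_def by (auto elim: oddE)
    define W where "W = {r. t + 1 \<le> r \<and> real r \<le> real t + a}"
    have finW: "finite W"
    proof (rule finite_subset)
      show "W \<subseteq> {..t + nat \<lceil>a\<rceil>}" unfolding W_def by auto linarith
    qed simp
    have r0W: "r0 \<in> W" unfolding W_def using r0 a2 by auto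
    have win: "K r0 \<le> (\<Sum>r\<in>W. K r)"
      by (rule member_le_sum[OF r0W]) (use Knn finW in auto)
    have Kr0: "exp \<delta> * q Tn r0 * exp (- \<phi> * (real t + 2)) \<le> K r0"
    proof -
      have "exp (- \<phi> * (real t + 2)) \<le> exp (- \<phi> * real r0)"
        using r0 phl l0 by (simp add: mult_left_mono)
      then show ?thesis unfolding K using q_nonneg[of Tn r0] by (simp add: mult_left_mono)
    qed
    define m where "m = t + nat \<lceil>a\<rceil>"
    define B where "B = {r. real r \<ge> real t + a}"
    have Bm: "B = {r. r \<ge> m}" unfolding B_def m_def using a2 by auto linarith+
    define C where "C = exp \<delta> * q Tn r0"
    have Cnn: "C \<ge> 0" unfolding C_def using q_nonneg by simp
    have x: "0 < exp (- \<phi>)" "exp (- \<phi>) < 1" using phl l0 by auto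
    have hs: "((\<lambda>r. C * exp (- \<phi>) ^ r) has_sum (C * exp (- \<phi>) ^ m / (1 - exp (- \<phi>)))) B"
      unfolding Bm by (rule tail_geom[OF Cnn x])
    have KB: "K r \<le> C * exp (- \<phi>) ^ r" if "r \<in> B" for r
    proof -
      have "r \<ge> r0" using that r0 a2 unfolding B_def by auto
      then have "q Tn r \<le> q Tn r0" using q_mono[OF T4 Tev r0(1) r0(2)] by simp
      moreover have "exp (- \<phi> * real r) = exp (- \<phi>) ^ r" by (simp add: exp_of_nat_mult[symmetric] mult.commute)
      ultimately show ?thesis unfolding K C_def by (simp add: mult_right_mono)
    qed
    have sKB: "K summable_on B"
      by (rule summable_on_comparison_test[OF has_sum_imp_summable[OF hs] KB Knn])
    have "infsum K B \<le> infsum (\<lambda>r. C * exp (- \<phi>) ^ r) B"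
      by (rule infsum_mono[OF sKB has_sum_imp_summable[OF hs] KB])
    also have "\<dots> = C * exp (- \<phi>) ^ m / (1 - exp (- \<phi>))" using hs by (rule infsumI)
    also have "\<dots> \<le> C * exp (- \<phi> * (real t + 2)) * \<eta>"
    proof -
      have "exp (- \<phi>) ^ m = exp (- \<phi> * real m)" by (simp add: exp_of_nat_mult[symmetric] mult.commute)
      also have "\<dots> \<le> exp (- \<phi> * (real t + a))"
      proof -
        have "real m \<ge> real t + a" unfolding m_def by simp linarith
        then show ?thesis using phl l0 by (simp add: mult_left_mono)
      qed
      also have "\<dots> = exp (- \<phi> * (real t + 2)) * exp (- \<phi> * (a - 2))" by (simp flip: exp_add add: algebra_simps)
      also have "\<dots> \<le> exp (- \<phi> * (real t + 2)) * exp (- l0 * (A - 2))"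
      proof -
        have "l0 * (A - 2) \<le> \<phi> * (a - 2)" using phl l0 aA A2 by (intro mult_mono) auto
        then show ?thesis by simp
      qed
      finally have e1: "exp (- \<phi>) ^ m \<le> exp (- \<phi> * (real t + 2)) * exp (- l0 * (A - 2))" .
      have e2: "1 - exp (- l0) \<le> 1 - exp (- \<phi>)" using phl by simp
      have pos: "0 < 1 - exp (- l0)" using l0 by simp
      have "C * exp (- \<phi>) ^ m / (1 - exp (- \<phi>)) \<le> C * exp (- \<phi>) ^ m / (1 - exp (- l0))"
        using e2 pos Cnn by (intro divide_left_mono mult_nonneg_nonneg) auto
      also have "\<dots> \<le> C * (exp (- \<phi> * (real t + 2)) * exp (- l0 * (A - 2))) / (1 - exp (- l0))"
        using e1 Cnn pos by (intro divide_right_mono mult_left_mono) auto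
      also have "\<dots> \<le> C * (exp (- \<phi> * (real t + 2)) * c) / (1 - exp (- l0))"
        using Ac Cnn pos by (intro divide_right_mono mult_left_mono) auto
      also have "\<dots> = C * exp (- \<phi> * (real t + 2)) * \<eta>"
        unfolding c_def using pos by (simp add: field_simps)
      finally show ?thesis .
    qed
    also have "\<dots> \<le> \<eta> * K r0" using Kr0 eta unfolding C_def by (simp add: mult.commute)
    also have "\<dots> \<le> \<eta> * (\<Sum>r\<in>W. K r)" using win eta by simp
    finally show "infsum (Kdist \<delta> (T N))
               {r. real r \<ge> real t + of_int \<lfloor>sqrt (real (T N))\<rfloor> / 2}
             \<le> \<eta> * (\<Sum>r\<in>{r. t + 1 \<le> r \<and> real r \<le> real t + of_int \<lfloor>sqrt (real (T N))\<rfloor> / 2}.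
                        Kdist \<delta> (T N) r)"
      unfolding K_def B_def W_def a_def Tn_def .
  qed
qed

end
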